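(* Let $\mu$ be an infinite cardinal and $k\geq 1$ a natural number. Then $\mu\to_{hc}(\mu)^2_k$; that is, for every coloring $c:[\mu]^2\to k$ there exist $i<k$ and $X\subseteq\mu$ with $|X|=\mu$ such that the graph $(X,\,c^{-1}(i)\cap[X]^2)$ is highly connected.
   Context: For a set $S$ and cardinal $\theta$, $[S]^\theta$ denotes the set of subsets of $S$ of size $\theta$; the complete graph on a cardinal $\nu$ has vertex set $\nu$ and edge set $[\nu]^2$. A graph $G=(V,E)$ is $\kappa$-connected if for every set $D\subseteq V$ with $|D|<\kappa$ the graph induced on $V\setminus D$ is connected. $G$ is highly connected if it is $|V|$-connected. For cardinals $\nu,\mu,\lambda$, write $\nu\to_{hc}(\mu)^2_\lambda$ if for every $c:[\nu]^2\to\lambda$ there are $\xi<\lambda$ and $X\in[\nu]^\mu$ such that $(X,c^{-1}(\xi)\cap[X]^2)$ is highly connected. *)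

theory Defs
  imports Main "HOL-Library.Equipollence"
begin

definition two_subsets :: "'a set \<Rightarrow> 'a set set" where
  "two_subsets S = {e. e \<subseteq> S \<and> card e = 2}"

definition graph_connected :: "'a set \<Rightarrow> 'a set set \<Rightarrow> bool" where
  "graph_connected V E \<longleftrightarrow>
     (\<forall>u\<in>V. \<forall>v\<in>V. (u, v) \<in> ({(x, y). x \<in> V \<and> y \<in> V \<and> {x, y} \<in> E})\<^sup>*)"

definition induced_edges :: "'a set set \<Rightarrow> 'a set \<Rightarrow> 'a set set" where
  "induced_edges E W = E \<inter> two_subsets W"

definition highly_connected :: "'a set \<Rightarrow> 'a set set \<Rightarrow> bool" where
  "highly_connected V E \<longleftrightarrow>
     (\<forall>D. D \<subseteq> V \<and> D \<prec> V \<longrightarrow> graph_connected (V - D) (induced_edges E (V - D)))"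

end

theory Submission
  imports Defs
begin

lemma lesspoll_ordLess: "A \<prec> B \<longleftrightarrow> ordLess2 (card_of A) (card_of B)"
proof -
  have 1: "A \<lesssim> B \<longleftrightarrow> ordLeq2 (card_of A) (card_of B)"
    by (simp add: lepoll_def card_of_ordLeq[symmetric])
  show ?thesis unfolding lesspoll_def 1 eqpoll_iff_card_of_ordIso
    using ordLeq_iff_ordLess_or_ordIso not_ordLess_ordIso ordLess_imp_ordLeq by blast
qed

lemma small_Un: "infinite M \<Longrightarrow> A \<prec> M \<Longrightarrow> B \<prec> M \<Longrightarrow> A \<union> B \<prec> M"
  by (simp add: lesspoll_ordLess card_of_Un_ordLess_infinite)

definition isF :: "'a set \<Rightarrow> 'a set set \<Rightarrow> bool" where
  "isF M F \<longleftrightarrow> F \<subseteq> Pow M \<and> (\<forall>A\<in>F. \<forall>B. A \<subseteq> B \<and> B \<subseteq> M \<longrightarrow> B \<in> F)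
     \<and> (\<forall>A\<in>F. \<forall>B\<in>F. A \<inter> B \<in> F) \<and> {} \<notin> F
     \<and> (\<forall>A. A \<subseteq> M \<and> M - A \<prec> M \<longrightarrow> A \<in> F)"


lemma isF_sub: "isF M F \<Longrightarrow> A \<in> F \<Longrightarrow> A \<subseteq> M" unfolding isF_def by blast
lemma isF_up: "isF M F \<Longrightarrow> A \<in> F \<Longrightarrow> A \<subseteq> B \<Longrightarrow> B \<subseteq> M \<Longrightarrow> B \<in> F" unfolding isF_def by blast
lemma isF_int: "isF M F \<Longrightarrow> A \<in> F \<Longrightarrow> B \<in> F \<Longrightarrow> A \<inter> B \<in> F" unfolding isF_def by blast
lemma isF_ne: "isF M F \<Longrightarrow> {} \<notin> F" unfolding isF_def by blast
lemma isF_co: "isF M F \<Longrightarrow> A \<subseteq> M \<Longrightarrow> M - A \<prec> M \<Longrightarrow> A \<in> F" unfolding isF_def by blast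

lemma empty_small: assumes "M \<noteq> {}" shows "({}::'a set) \<prec> (M::'a set)"
proof -
  have "({}::'a set) \<lesssim> M" using subset_imp_lepoll[of "{}" M] by simp
  moreover have "\<not> ({}::'a set) \<approx> M"
  proof
    assume "({}::'a set) \<approx> M"
    then have "M \<approx> ({}::'a set)" by (rule eqpoll_sym)
    then show False using assms by simp
  qed
  ultimately show ?thesis unfolding lesspoll_def by simp
qed

lemma M_in: assumes "infinite M" "isF M F" shows "M \<in> F"
proof -
  have "M - M \<prec> M" using empty_small[of M] assms(1) by auto
  then show ?thesis using isF_co[OF assms(2)] by blast
qed

lemma exists_ultra:
  assumes inf: "infinite M"
  shows "\<exists>F. isF M F \<and> (\<forall>S. S \<subseteq> M \<longrightarrow> S \<in> F \<or> M - S \<in> F)"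
proof -
  define F0 where "F0 = {A. A \<subseteq> M \<and> M - A \<prec> M}"
  have F0: "isF M F0"
    unfolding isF_def F0_def
  proof (intro conjI ballI allI impI)
    fix A B assume "A \<in> {A. A \<subseteq> M \<and> M - A \<prec> M}" "A \<subseteq> B \<and> B \<subseteq> M"
    then show "B \<in> {A. A \<subseteq> M \<and> M - A \<prec> M}"
      using lesspoll_trans1[OF subset_imp_lepoll[of "M - B" "M - A"]] by auto
  next
    fix A B assume "A \<in> {A. A \<subseteq> M \<and> M - A \<prec> M}" "B \<in> {A. A \<subseteq> M \<and> M - A \<prec> M}"
    then show "A \<inter> B \<in> {A. A \<subseteq> M \<and> M - A \<prec> M}"
      using small_Un[OF inf, of "M - A" "M - B"] by (auto simp: Diff_Int)
  qed auto
  define Fs where "Fs = {F. isF M F}"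
  have "\<exists>U\<in>Fs. \<forall>X\<in>C. X \<subseteq> U" if C: "C \<in> chains Fs" for C
  proof (cases "C = {}")
    case True then show ?thesis using F0 Fs_def by auto
  next
    case False
    then obtain G where G: "G \<in> C" by auto
    have CF: "\<And>F. F \<in> C \<Longrightarrow> isF M F" using C by (auto simp: chains_def Fs_def)
    have ch: "\<And>A B. A \<in> C \<Longrightarrow> B \<in> C \<Longrightarrow> A \<subseteq> B \<or> B \<subseteq> A"
      using C by (auto simp: chains_def chain_subset_def)
    have "isF M (\<Union>C)"
      unfolding isF_def
    proof (intro conjI ballI allI impI)
      show "\<Union>C \<subseteq> Pow M" using CF isF_sub by blast
    next
      fix A B assume "A \<in> \<Union>C" "A \<subseteq> B \<and> B \<subseteq> M"
      then show "B \<in> \<Union>C" using CF isF_up by blast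
    next
      fix A B assume A: "A \<in> \<Union>C" and B: "B \<in> \<Union>C"
      then obtain F1 F2 where F: "F1 \<in> C" "F2 \<in> C" "A \<in> F1" "B \<in> F2" by auto
      have I1: "\<forall>A\<in>F1. \<forall>B\<in>F1. A \<inter> B \<in> F1" using CF[of F1] F(1) isF_int by blast
      have I2: "\<forall>A\<in>F2. \<forall>B\<in>F2. A \<inter> B \<in> F2" using CF[of F2] F(2) isF_int by blast
      show "A \<inter> B \<in> \<Union>C"
      proof (cases "F1 \<subseteq> F2")
        case True then have "A \<inter> B \<in> F2" using F I2 by blast
        then show ?thesis using F(2) by blast
      next
        case False then have "F2 \<subseteq> F1" using ch F by blast
        then have "A \<inter> B \<in> F1" using F I1 by blast
        then show ?thesis using F(1) by blast
      qed
    next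
      show "{} \<notin> \<Union>C" using CF isF_ne by blast
    next
      fix A assume "A \<subseteq> M \<and> M - A \<prec> M"
      then show "A \<in> \<Union>C" using isF_co[OF CF[OF G]] G by blast
    qed
    then show ?thesis using Fs_def by auto
  qed
  then obtain Fm where Fm: "Fm \<in> Fs" and mx: "\<forall>X\<in>Fs. Fm \<subseteq> X \<longrightarrow> X = Fm"
    using Zorn_Lemma2[of Fs] by blast
  have iF: "isF M Fm" using Fm Fs_def by auto
  have "S \<in> Fm \<or> M - S \<in> Fm" if S: "S \<subseteq> M" for S
  proof (cases "\<forall>A\<in>Fm. A \<inter> S \<noteq> {}")
    case True
    define F' where "F' = {B. B \<subseteq> M \<and> (\<exists>A\<in>Fm. A \<inter> S \<subseteq> B)}"
    have sub: "Fm \<subseteq> F'" using isF_sub[OF iF] unfolding F'_def by blast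
    have "isF M F'"
      unfolding isF_def
    proof (intro conjI ballI allI impI)
      show "F' \<subseteq> Pow M" unfolding F'_def by auto
    next
      fix A B assume "A \<in> F'" "A \<subseteq> B \<and> B \<subseteq> M"
      then show "B \<in> F'" unfolding F'_def by blast
    next
      fix A B assume "A \<in> F'" "B \<in> F'"
      then obtain A1 A2 where "A1 \<in> Fm" "A2 \<in> Fm" "A1 \<inter> S \<subseteq> A" "A2 \<inter> S \<subseteq> B"
        "A \<subseteq> M" "B \<subseteq> M"
        unfolding F'_def by blast
      moreover then have "A1 \<inter> A2 \<in> Fm" using isF_int[OF iF] by blast
      ultimately show "A \<inter> B \<in> F'" unfolding F'_def by blast
    next
      show "{} \<notin> F'" using True unfolding F'_def by blast
    next
      fix A assume "A \<subseteq> M \<and> M - A \<prec> M"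
      then show "A \<in> F'" using sub isF_co[OF iF] by blast
    qed
    then have "F' = Fm" using mx sub Fs_def by auto
    moreover have "S \<in> F'" using M_in[OF inf iF] S unfolding F'_def by blast
    ultimately show ?thesis by simp
  next
    case False
    then obtain A where "A \<in> Fm" "A \<inter> S = {}" by auto
    then have "A \<subseteq> M - S" using isF_sub[OF iF] by blast
    then show ?thesis using \<open>A \<in> Fm\<close> isF_up[OF iF] by blast
  qed
  then show ?thesis using iF by blast
qed

lemma big:
  assumes "isF M F" "A \<in> F" shows "A \<approx> M"
proof -
  have AM: "A \<subseteq> M" using assms isF_sub by blast
  have "\<not> A \<prec> M"
  proof
    assume "A \<prec> M"
    then have "M - (M - A) \<prec> M" using AM by (simp add: Diff_Diff_Int Int_absorb1)
    then have "M - A \<in> F" using isF_co[OF assms(1)] by blast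
    then have "A \<inter> (M - A) \<in> F" using isF_int[OF assms(1)] assms(2) by blast
    then show False using isF_ne[OF assms(1)] by simp
  qed
  then show ?thesis using subset_imp_lepoll[OF AM] unfolding lesspoll_def by blast
qed

lemma pigeon:
  assumes iF: "isF M F" and ult: "\<forall>S. S \<subseteq> M \<longrightarrow> S \<in> F \<or> M - S \<in> F"
    and P: "\<And>i. P i \<subseteq> M"
  shows "B \<in> F \<Longrightarrow> B \<subseteq> (\<Union>i<(k::nat). P i) \<Longrightarrow> \<exists>i<k. P i \<in> F"
proof (induction k arbitrary: B)
  case 0
  then show ?case using isF_ne[OF iF] by auto
next
  case (Suc k)
  show ?case
  proof (cases "P k \<in> F")
    case True then show ?thesis by auto
  next
    case False
    then have "M - P k \<in> F" using ult P by blast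
    then have "B \<inter> (M - P k) \<in> F" using Suc.prems isF_int[OF iF] by blast
    moreover have "B \<inter> (M - P k) \<subseteq> (\<Union>i<k. P i)" using Suc.prems(2)
      by (auto simp: lessThan_Suc)
    ultimately show ?thesis using Suc.IH by (meson less_SucI)
  qed
qed

lemma card2: "a \<noteq> b \<Longrightarrow> card {a, b} = 2" by simp

theorem mainTheorem1:
  fixes M :: "'a set" and k :: nat and c :: "'a set \<Rightarrow> nat"
  assumes "infinite M"
    and "k \<ge> 1"
    and "\<forall>e\<in>two_subsets M. c e < k"
  shows "\<exists>i<k. \<exists>X. X \<subseteq> M \<and> X \<approx> M \<and>
           highly_connected X {e \<in> two_subsets X. c e = i}"
proof -
  obtain F where iF: "isF M F" and ult: "\<forall>S. S \<subseteq> M \<longrightarrow> S \<in> F \<or> M - S \<in> F"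
    using exists_ultra[OF assms(1)] by blast
  define N where "N i x = {y \<in> M. y \<noteq> x \<and> c {x, y} = i}" for i x
  define A where "A i = {x \<in> M. N i x \<in> F}" for i
  have "x \<in> M \<Longrightarrow> \<exists>i<k. N i x \<in> F" for x
  proof -
    assume x: "x \<in> M"
    have "M - (M - {x}) \<prec> M"
    proof -
      have "finite (M - (M - {x}))" by (rule finite_subset[of _ "{x}"]) auto
      then show ?thesis using finite_lesspoll_infinite[OF assms(1)] by blast
    qed
    then have "M - {x} \<in> F" using isF_co[OF iF] by blast
    moreover have "M - {x} \<subseteq> (\<Union>i<k. N i x)"
    proof
      fix y assume y: "y \<in> M - {x}"
      then have "{x, y} \<in> two_subsets M" using x unfolding two_subsets_def by auto
      then have "c {x, y} < k" using assms(3) by blast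
      then show "y \<in> (\<Union>i<k. N i x)" using y unfolding N_def by auto
    qed
    ultimately show ?thesis using pigeon[OF iF ult, of "\<lambda>i. N i x"] unfolding N_def by blast
  qed
  then have "M \<subseteq> (\<Union>i<k. A i)" unfolding A_def by blast
  then obtain i where i: "i < k" "A i \<in> F"
    using pigeon[OF iF ult, of A, OF _ M_in[OF assms(1) iF]] unfolding A_def by blast
  define X where "X = A i"
  have XM: "X \<subseteq> M" unfolding X_def A_def by auto
  have XeM: "X \<approx> M" using big[OF iF] i X_def by blast
  have "highly_connected X {e \<in> two_subsets X. c e = i}"
    unfolding highly_connected_def graph_connected_def
  proof (intro allI impI ballI)
    fix D u v assume D: "D \<subseteq> X \<and> D \<prec> X" and u: "u \<in> X - D" and v: "v \<in> X - D"
    let ?R = "{(x, y). x \<in> X - D \<and> y \<in> X - D \<and>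
               {x, y} \<in> induced_edges {e \<in> two_subsets X. c e = i} (X - D)}"
    have edge: "(a, b) \<in> ?R" if "a \<in> X - D" "b \<in> X - D" "a \<noteq> b" "c {a, b} = i" for a b
      using that unfolding induced_edges_def two_subsets_def by (auto simp: card2)
    show "(u, v) \<in> ?R\<^sup>*"
    proof (cases "u = v")
      case True then show ?thesis by simp
    next
      case False
      have "N i u \<in> F" using u by (simp add: X_def A_def)
      moreover have "N i v \<in> F" using v by (simp add: X_def A_def)
      ultimately have "N i u \<inter> N i v \<in> F" using isF_int[OF iF] by blast
      then have "N i u \<inter> N i v \<inter> X \<in> F" using isF_int[OF iF] i(2) unfolding X_def by blast
      then have CM: "N i u \<inter> N i v \<inter> X \<approx> M" by (rule big[OF iF])
      have "\<exists>w \<in> N i u \<inter> N i v \<inter> X. w \<notin> D"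
      proof (rule ccontr)
        assume "\<not> ?thesis"
        then have "N i u \<inter> N i v \<inter> X \<subseteq> D" by blast
        then have "N i u \<inter> N i v \<inter> X \<lesssim> D" by (rule subset_imp_lepoll)
        moreover have "D \<prec> M" using D XeM by (meson lesspoll_eq_trans)
        ultimately have "N i u \<inter> N i v \<inter> X \<prec> M" by (rule lesspoll_trans1)
        then have "M \<prec> M" by (rule eq_lesspoll_trans[OF eqpoll_sym[OF CM]])
        then show False by simp
      qed
      then obtain w where w: "w \<in> N i u" "w \<in> N i v" "w \<in> X" "w \<notin> D" by blast
      have e1: "(u, w) \<in> ?R" using w u unfolding N_def by (intro edge) auto
      have e2: "(w, v) \<in> ?R" using w v unfolding N_def by (intro edge) (auto simp: insert_commute)
      show ?thesis using e1 e2 by (meson r_into_rtrancl rtrancl_trans)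
    qed
  qed
  then show ?thesis using i XM XeM X_def by blast
qed

end
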